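(* Let $n\ge 2$ and let $\mathcal{S}_n$ be the star graph with vertices $x_0,x_1,\dots,x_n$ and edges $\{x_0,x_k\}$, $k=1,\dots,n$; let $S=\Bbbk[x_0,\dots,x_n]$. Then for all $i\ge 1$, $$b_{i,n+1}(S/I_3(\mathcal{S}_n))=\begin{cases} i & \text{if } n+1=i+2,\\ 0&\text{otherwise.}\end{cases}$$
   Context: $\Bbbk$ is a field. $I_3(G)$ is the path ideal generated by all monomials $xyz$ where $x,y,z$ are distinct vertices with $\{x,y\}$ and $\{y,z\}$ edges; for $\mathcal{S}_n$ it is generated by $x_0x_jx_k$, $1\le j<k\le n$. $b_{i,j}(S/I)=\dim_\Bbbk\operatorname{Tor}^S_i(S/I,\Bbbk)_j$. *)

theory Defs
  imports Main "HOL.Vector_Spaces" "HOL-Library.Function_Algebras"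
begin

text \<open>Monomials in the variables x_v (v a nat) are exponent vectors nat \<Rightarrow> nat.
  A monomial ideal is given by a set of monomial generators.\<close>

definition mono_supp :: "nat set \<Rightarrow> (nat \<Rightarrow> nat) \<Rightarrow> bool" where
  "mono_supp V m \<longleftrightarrow> (\<forall>v. v \<notin> V \<longrightarrow> m v = 0)"

definition mono_deg :: "nat set \<Rightarrow> (nat \<Rightarrow> nat) \<Rightarrow> nat" where
  "mono_deg V m = (\<Sum>v\<in>V. m v)"

definition in_mono_ideal :: "(nat \<Rightarrow> nat) set \<Rightarrow> (nat \<Rightarrow> nat) \<Rightarrow> bool" where
  "in_mono_ideal Gs m \<longleftrightarrow> (\<exists>g\<in>Gs. \<forall>v. g v \<le> m v)"

definition sqfree_mono :: "nat set \<Rightarrow> (nat \<Rightarrow> nat)" where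
  "sqfree_mono A = (\<lambda>v. if v \<in> A then 1 else 0)"

definition path3_gens :: "nat set \<Rightarrow> (nat \<Rightarrow> nat \<Rightarrow> bool) \<Rightarrow> (nat \<Rightarrow> nat) set" where
  "path3_gens V E = {sqfree_mono {x, y, z} | x y z.
      x \<in> V \<and> y \<in> V \<and> z \<in> V \<and> x \<noteq> y \<and> y \<noteq> z \<and> x \<noteq> z \<and> E x y \<and> E y z}"

definition star_edge :: "nat \<Rightarrow> nat \<Rightarrow> nat \<Rightarrow> bool" where
  "star_edge n a b \<longleftrightarrow> (a = 0 \<and> b \<in> {1..n}) \<or> (b = 0 \<and> a \<in> {1..n})"

text \<open>Graded Betti numbers b_{i,j}(S/I) = dim_k Tor_i^S(S/I,k)_j, where
  S = k[x_v | v \<in> V] and I is the monomial ideal generated by Gs.  Tor is computed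
  by tensoring S/I with the Koszul complex K(x_v : v\<in>V), the minimal free
  S-resolution of k.  The degree-j part of (S/I) \<otimes> K_i has k-basis the pairs
  (m, F) with m a monomial not in I, F \<subseteq> V, card F = i, deg m + i = j.\<close>

definition kbasis :: "nat set \<Rightarrow> (nat \<Rightarrow> nat) set \<Rightarrow> nat \<Rightarrow> nat \<Rightarrow> ((nat \<Rightarrow> nat) \<times> nat set) set" where
  "kbasis V Gs i j = {(m, F). mono_supp V m \<and> \<not> in_mono_ideal Gs m \<and> F \<subseteq> V
       \<and> card F = i \<and> mono_deg V m + i = j}"

definition kchains :: "'k::field itself \<Rightarrow> nat set \<Rightarrow> (nat \<Rightarrow> nat) set \<Rightarrow> nat \<Rightarrow> nat
    \<Rightarrow> (((nat \<Rightarrow> nat) \<times> nat set) \<Rightarrow> 'k) set" where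
  "kchains _ V Gs i j = {c. \<forall>b. b \<notin> kbasis V Gs i j \<longrightarrow> c b = 0}"

text \<open>Koszul differential d(m \<otimes> e_F) = \<Sum>_{f\<in>F} (-1)^{#\{g\<in>F. g<f\}} (x_f m) \<otimes> e_{F-{f}},
  where x_f m is zero in S/I when it lies in I.  Written coefficientwise.\<close>
definition kdiff :: "nat set \<Rightarrow> (nat \<Rightarrow> nat) set \<Rightarrow> nat \<Rightarrow> nat
    \<Rightarrow> (((nat \<Rightarrow> nat) \<times> nat set) \<Rightarrow> 'k::field) \<Rightarrow> (((nat \<Rightarrow> nat) \<times> nat set) \<Rightarrow> 'k)" where
  "kdiff V Gs i j c = (\<lambda>(m', G).
     if i = 0 \<or> (m', G) \<notin> kbasis V Gs (i - 1) j then 0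
     else (\<Sum>f\<in>{f\<in>V - G. 1 \<le> m' f \<and> (m'(f := m' f - 1), insert f G) \<in> kbasis V Gs i j}.
             (-1) ^ card {g\<in>G. g < f} * c (m'(f := m' f - 1), insert f G)))"

definition kscale :: "'k::field \<Rightarrow> ('b \<Rightarrow> 'k) \<Rightarrow> ('b \<Rightarrow> 'k)" where
  "kscale a c = (\<lambda>x. a * c x)"

definition betti :: "'k::field itself \<Rightarrow> nat set \<Rightarrow> (nat \<Rightarrow> nat) set \<Rightarrow> nat \<Rightarrow> nat \<Rightarrow> nat" where
  "betti K V Gs i j =
     vector_space.dim (kscale :: 'k \<Rightarrow> _)
        {c \<in> kchains K V Gs i j. (kdiff V Gs i j c :: _ \<Rightarrow> 'k) = (\<lambda>_. 0)}
   - vector_space.dim (kscale :: 'k \<Rightarrow> _)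
        ((kdiff V Gs (i + 1) j :: _ \<Rightarrow> _ \<Rightarrow> 'k) ` kchains K V Gs (i + 1) j)"

end

theory Submission
  imports Defs
begin

definition bad :: "nat \<Rightarrow> (nat \<Rightarrow> nat) \<Rightarrow> bool" where
  "bad n m \<longleftrightarrow> 0 < m 0 \<and> (\<exists>a\<in>{1..n}. \<exists>b\<in>{1..n}. a \<noteq> b \<and> 0 < m a \<and> 0 < m b)"

lemma inI: "in_mono_ideal (path3_gens {0..n} (star_edge n)) m \<longleftrightarrow> bad n m"
proof
  assume "in_mono_ideal (path3_gens {0..n} (star_edge n)) m"
  then obtain x y z where g: "x \<in> {0..n}" "y \<in> {0..n}" "z \<in> {0..n}" "x \<noteq> y" "y \<noteq> z" "x \<noteq> z"
    "star_edge n x y" "star_edge n y z" and le: "\<forall>v. sqfree_mono {x,y,z} v \<le> m v"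
    unfolding in_mono_ideal_def path3_gens_def by blast
  have "y = 0" using g unfolding star_edge_def by auto
  hence "x \<in> {1..n}" "z \<in> {1..n}" using g unfolding star_edge_def by auto
  moreover have "0 < m x" "0 < m y" "0 < m z" using le[rule_format, of x] le[rule_format, of y] le[rule_format, of z]
    unfolding sqfree_mono_def by auto
  ultimately show "bad n m" unfolding bad_def using \<open>y = 0\<close> g by blast
next
  assume "bad n m"
  then obtain a b where ab: "a\<in>{1..n}" "b\<in>{1..n}" "a \<noteq> b" "0 < m a" "0 < m b" "0 < m 0"
    unfolding bad_def by blast
  have "sqfree_mono {a,0,b} \<in> path3_gens {0..n} (star_edge n)"
    unfolding path3_gens_def star_edge_def using ab by force
  moreover have "\<forall>v. sqfree_mono {a,0,b} v \<le> m v" using ab unfolding sqfree_mono_def by auto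
  ultimately show "in_mono_ideal (path3_gens {0..n} (star_edge n)) m"
    unfolding in_mono_ideal_def by blast
qed

abbreviation KB :: "nat \<Rightarrow> nat \<Rightarrow> ((nat \<Rightarrow> nat) \<times> nat set) set" where
  "KB n i \<equiv> kbasis {0..n} (path3_gens {0..n} (star_edge n)) i (n + 1)"

lemma KB_iff: "(m, F) \<in> KB n i \<longleftrightarrow> mono_supp {0..n} m \<and> \<not> bad n m \<and> F \<subseteq> {0..n} \<and> card F = i
   \<and> mono_deg {0..n} m + i = n + 1"
  unfolding kbasis_def by (simp add: inI)

lemma KB_iff': "(m, F) \<in> kbasis {0..n} (path3_gens {0..n} (star_edge n)) i (Suc n) \<longleftrightarrow>
   mono_supp {0..n} m \<and> \<not> bad n m \<and> F \<subseteq> {0..n} \<and> card F = i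
   \<and> mono_deg {0..n} m + i = n + 1"
  unfolding kbasis_def by (simp add: inI)

lemma finite_KB: "finite (KB n i)"
proof -
  have "KB n i \<subseteq> {m. \<forall>x. (x \<in> {0..n} \<longrightarrow> m x \<in> {0..n+1}) \<and> (x \<notin> {0..n} \<longrightarrow> m x = 0)} \<times> Pow {0..n}"
  proof clarify
    fix m F assume "(m, F) \<in> KB n i"
    hence *: "mono_supp {0..n} m" "F \<subseteq> {0..n}" "mono_deg {0..n} m + i = n + 1" by (auto simp: KB_iff KB_iff')
    { fix x assume "x \<in> {0..n}"
      hence "m x \<le> mono_deg {0..n} m" unfolding mono_deg_def by (intro member_le_sum) auto
      hence "m x \<in> {0..n+1}" using * by auto }
    thus "m \<in> {m. \<forall>x. (x \<in> {0..n} \<longrightarrow> m x \<in> {0..n+1}) \<and> (x \<notin> {0..n} \<longrightarrow> m x = 0)} \<and> F \<in> Pow {0..n}"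
      using * unfolding mono_supp_def by auto
  qed
  moreover have "finite ({m. \<forall>x. (x \<in> {0..n} \<longrightarrow> m x \<in> {0..n+1}) \<and> (x \<notin> {0..n} \<longrightarrow> m x = 0)} \<times> Pow {0..n})"
    by (intro finite_cartesian_product finite_set_of_finite_funs) auto
  ultimately show ?thesis by (rule finite_subset)
qed

interpretation kv: vector_space "kscale :: 'k::field \<Rightarrow> ('b \<Rightarrow> 'k) \<Rightarrow> ('b \<Rightarrow> 'k)"
  by unfold_locales (auto simp: kscale_def algebra_simps fun_eq_iff)

lemma (in vector_space) dim_direct_sum:
  assumes sB: "subspace B" and BT: "B \<subseteq> span T" and fT: "finite T" and iD: "independent D"
    and fD: "finite D" and Z: "Z = {x + y | x y. x \<in> B \<and> y \<in> span D}" and int: "B \<inter> span D \<subseteq> {0}"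
  shows "dim Z = dim B + card D"
proof -
  obtain Bb where Bb: "Bb \<subseteq> B" "independent Bb" "B \<subseteq> span Bb" "card Bb = dim B"
    using basis_exists by blast
  have fBb: "finite Bb" using independent_span_bound[OF fT Bb(2)] Bb(1) BT by auto
  have spBb: "span Bb \<subseteq> B" using Bb(1) sB by (simp add: span_minimal)
  have disj: "Bb \<inter> D = {}"
  proof (rule ccontr)
    assume "Bb \<inter> D \<noteq> {}"
    then obtain x where x: "x \<in> Bb" "x \<in> D" by blast
    hence "x \<in> B \<inter> span D" using Bb(1) span_base by blast
    hence "x = 0" using int by blast
    thus False using x Bb(2) dependent_zero by blast
  qed
  have ind: "independent (Bb \<union> D)"
    unfolding independent_explicit_module
  proof (intro allI impI)
    fix t u v
    assume t: "finite t" "t \<subseteq> Bb \<union> D" "(\<Sum>v\<in>t. u v *s v) = 0" "v \<in> t"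
    define s1 where "s1 = (\<Sum>v\<in>t \<inter> Bb. u v *s v)"
    define s2 where "s2 = (\<Sum>v\<in>t \<inter> D. u v *s v)"
    have "t = (t \<inter> Bb) \<union> (t \<inter> D)" using t by blast
    hence "(\<Sum>v\<in>t. u v *s v) = s1 + s2" unfolding s1_def s2_def
      by (metis (no_types, lifting) disj Int_assoc Int_commute Int_empty_right finite_Int sum.union_disjoint t(1))
    hence s: "s1 + s2 = 0" using t by simp
    have "s1 \<in> span Bb" unfolding s1_def by (intro span_sum span_scale span_base) auto
    hence s1B: "s1 \<in> B" using spBb by blast
    have s2D: "s2 \<in> span D" unfolding s2_def by (intro span_sum span_scale span_base) auto
    have "s2 = - s1" using s by (simp add: eq_neg_iff_add_eq_0 add.commute)
    hence "s2 \<in> B" using s1B sB by (simp add: subspace_neg)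
    hence "s2 = 0" using s2D int by blast
    hence "s1 = 0" using s by simp
    show "u v = 0"
    proof (cases "v \<in> Bb")
      case True
      show ?thesis using independentD[OF Bb(2), of "t \<inter> Bb" u v] \<open>s1 = 0\<close> t True
        unfolding s1_def by auto
    next
      case False
      hence "v \<in> D" using t by blast
      show ?thesis using independentD[OF iD, of "t \<inter> D" u v] \<open>s2 = 0\<close> t \<open>v \<in> D\<close>
        unfolding s2_def by auto
    qed
  qed
  have sub: "Bb \<union> D \<subseteq> Z"
  proof
    fix x assume "x \<in> Bb \<union> D"
    thus "x \<in> Z"
    proof
      assume "x \<in> Bb" thus ?thesis unfolding Z using Bb(1) span_zero[of D] by force
    next
      assume "x \<in> D" thus ?thesis unfolding Z using subspace_0[OF sB] span_base[of x D] by force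
    qed
  qed
  have sp: "Z \<subseteq> span (Bb \<union> D)"
  proof
    fix z assume "z \<in> Z"
    then obtain x y where xy: "z = x + y" "x \<in> B" "y \<in> span D" unfolding Z by blast
    have "x \<in> span (Bb \<union> D)" using xy(2) Bb(3) span_mono[of Bb "Bb \<union> D"] by blast
    moreover have "y \<in> span (Bb \<union> D)" using xy(3) span_mono[of D "Bb \<union> D"] by blast
    ultimately show "z \<in> span (Bb \<union> D)" using xy(1) span_add by blast
  qed
  have "card (Bb \<union> D) = dim Z" by (rule basis_card_eq_dim[OF sub sp ind])
  thus ?thesis using card_Un_disjoint[OF fBb fD disj] Bb(4) by simp
qed

abbreviation GS :: "nat \<Rightarrow> (nat \<Rightarrow> nat) set" where
  "GS n \<equiv> path3_gens {0..n} (star_edge n)"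

lemma kdiff_eval:
  assumes i: "1 \<le> i" and mG: "(m, G) \<in> KB n (i - 1)" and c: "\<forall>b. b \<notin> KB n i \<longrightarrow> c b = 0"
  shows "kdiff {0..n} (GS n) i (n + 1) c (m, G) =
    (\<Sum>f\<in>{f\<in>{0..n} - G. 1 \<le> m f}. (-1) ^ card {g\<in>G. g < f} * c (m(f := m f - 1), insert f G))"
proof -
  have "kdiff {0..n} (GS n) i (n + 1) c (m, G) =
    (\<Sum>f\<in>{f\<in>{0..n} - G. 1 \<le> m f \<and> (m(f := m f - 1), insert f G) \<in> KB n i}.
       (-1) ^ card {g\<in>G. g < f} * c (m(f := m f - 1), insert f G))"
    unfolding kdiff_def using i mG by simp
  also have "\<dots> = (\<Sum>f\<in>{f\<in>{0..n} - G. 1 \<le> m f}. (-1) ^ card {g\<in>G. g < f} * c (m(f := m f - 1), insert f G))"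
    by (rule sum.mono_neutral_left) (use c in auto)
  finally show ?thesis .
qed

lemma kdiff_out:
  assumes "(m, G) \<notin> KB n (i - 1)"
  shows "kdiff {0..n} (GS n) i (n + 1) c (m, G) = 0"
  unfolding kdiff_def using assms by simp

lemma kdiff_out': "x \<notin> KB n (i - 1) \<Longrightarrow> kdiff {0..n} (GS n) i (n + 1) c x = 0"
  using kdiff_out by (cases x) auto

lemma mono_deg_upd:
  assumes "finite V" "f \<in> V"
  shows "mono_deg V (m(f := x)) + m f = mono_deg V m + x"
proof -
  have "mono_deg V (m(f := x)) = x + (\<Sum>v\<in>V - {f}. m v)"
    unfolding mono_deg_def using assms by (simp add: sum.remove)
  moreover have "mono_deg V m = m f + (\<Sum>v\<in>V - {f}. m v)"
    unfolding mono_deg_def using assms by (simp add: sum.remove)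
  ultimately show ?thesis by simp
qed

lemma bad_mono: "bad n m' \<Longrightarrow> (\<forall>v. 0 < m' v \<longrightarrow> 0 < m v) \<Longrightarrow> bad n m"
  unfolding bad_def by blast

lemma KB_dec:
  assumes "(m, G) \<in> KB n (i - 1)" "1 \<le> i" "f \<in> {0..n} - G" "1 \<le> m f"
  shows "(m(f := m f - 1), insert f G) \<in> KB n i"
proof -
  have h: "mono_supp {0..n} m" "\<not> bad n m" "G \<subseteq> {0..n}" "card G = i - 1" "mono_deg {0..n} m + (i - 1) = n + 1"
    using assms(1) by (auto simp: KB_iff KB_iff')
  have "\<forall>v. 0 < (m(f := m f - 1)) v \<longrightarrow> 0 < m v" by auto
  hence "\<not> bad n (m(f := m f - 1))" using h(2) bad_mono[of n "m(f := m f - 1)" m] by blast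
  moreover have "mono_supp {0..n} (m(f := m f - 1))" using h(1) assms(3) unfolding mono_supp_def by auto
  moreover have "card (insert f G) = i" using h(3,4) assms(2,3) finite_subset[OF h(3)] by auto
  moreover have "mono_deg {0..n} (m(f := m f - 1)) + 1 = mono_deg {0..n} m"
    using mono_deg_upd[of "{0..n}" f m "m f - 1"] assms(3,4) by auto
  ultimately show ?thesis using h assms by (auto simp: KB_iff KB_iff')
qed

lemma KB_inc:
  assumes "(m, F) \<in> KB n i" "1 \<le> i" "v \<in> F" "\<not> bad n (m(v := Suc (m v)))"
  shows "(m(v := Suc (m v)), F - {v}) \<in> KB n (i - 1)"
proof -
  have h: "mono_supp {0..n} m" "F \<subseteq> {0..n}" "card F = i" "mono_deg {0..n} m + i = n + 1"
    using assms(1) by (auto simp: KB_iff KB_iff')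
  have "mono_supp {0..n} (m(v := Suc (m v)))" using h(1,2) assms(3) unfolding mono_supp_def by auto
  moreover have "card (F - {v}) = i - 1" using h(2,3) assms(3) finite_subset[OF h(2)] by auto
  moreover have "mono_deg {0..n} (m(v := Suc (m v))) = mono_deg {0..n} m + 1"
    using mono_deg_upd[of "{0..n}" v m "Suc (m v)"] assms(3) h(2) by auto
  ultimately show ?thesis using h assms by (auto simp: KB_iff KB_iff')
qed

definition alpha :: "(nat \<Rightarrow> nat) \<Rightarrow> nat set \<Rightarrow> nat \<Rightarrow> nat" where
  "alpha m F = (\<lambda>w. m w + (if w \<in> F then 1 else 0))"

definition vsel :: "(nat \<Rightarrow> nat) \<Rightarrow> nat set \<Rightarrow> nat" where
  "vsel m F = (if \<exists>w. 2 \<le> alpha m F w then LEAST w. 2 \<le> alpha m F w else 1)"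

lemma alpha_dec: "f \<notin> F \<Longrightarrow> 1 \<le> m f \<Longrightarrow> alpha (m(f := m f - 1)) (insert f F) = alpha m F"
  unfolding alpha_def by auto

lemma alpha_inc: "v \<in> F \<Longrightarrow> alpha (m(v := Suc (m v))) (F - {v}) = alpha m F"
  unfolding alpha_def by auto

lemma vsel_dec: assumes "f \<notin> F" "1 \<le> m f" shows "vsel (m(f := m f - 1)) (insert f F) = vsel m F"
  by (simp only: vsel_def alpha_dec[of f F m, OF assms])

lemma vsel_inc: assumes "v \<in> F" shows "vsel (m(v := Suc (m v))) (F - {v}) = vsel m F"
  by (simp only: vsel_def alpha_inc[OF assms])

lemma alpha_sum:
  assumes "(m, F) \<in> KB n i"
  shows "(\<Sum>w\<in>{0..n}. alpha m F w) = n + 1"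
proof -
  have h: "F \<subseteq> {0..n}" "card F = i" "mono_deg {0..n} m + i = n + 1"
    using assms by (auto simp: KB_iff KB_iff')
  have "(\<Sum>w\<in>{0..n}. alpha m F w) = mono_deg {0..n} m + (\<Sum>w\<in>{0..n}. if w \<in> F then 1 else 0)"
    unfolding alpha_def mono_deg_def by (simp add: sum.distrib)
  also have "(\<Sum>w\<in>{0..n}. if w \<in> F then 1 else (0::nat)) = card F"
    using h(1) by (simp add: sum.If_cases Int_absorb1)
  finally show ?thesis using h by simp
qed

lemma alpha_out: "(m, F) \<in> KB n i \<Longrightarrow> w \<notin> {0..n} \<Longrightarrow> alpha m F w = 0"
  unfolding alpha_def by (auto simp: KB_iff KB_iff' mono_supp_def)

lemma all_le1:
  assumes "(m, F) \<in> KB n i" "\<forall>w. alpha m F w \<le> 1" "w \<in> {0..n}"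
  shows "alpha m F w = 1"
proof (rule ccontr)
  assume "alpha m F w \<noteq> 1"
  hence w0: "alpha m F w = 0" using assms(2)[rule_format, of w] by auto
  have "(\<Sum>w\<in>{0..n}. alpha m F w) = alpha m F w + (\<Sum>w\<in>{0..n} - {w}. alpha m F w)"
    using assms(3) by (simp add: sum.remove)
  also have "\<dots> \<le> 0 + (\<Sum>w\<in>{0..n} - {w}. 1)"
    using w0 assms(2) by (intro add_mono sum_mono) auto
  also have "\<dots> = n" using assms(3) by simp
  finally show False using alpha_sum[OF assms(1)] by simp
qed

lemma vsel_props:
  assumes "(m, F) \<in> KB n i" "1 \<le> n"
  shows "vsel m F \<in> {0..n}" "1 \<le> alpha m F (vsel m F)"
proof -
  have "vsel m F \<in> {0..n} \<and> 1 \<le> alpha m F (vsel m F)"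
  proof (cases "\<exists>w. 2 \<le> alpha m F w")
    case True
    hence "2 \<le> alpha m F (vsel m F)" unfolding vsel_def using LeastI_ex[OF True] by simp
    moreover hence "vsel m F \<in> {0..n}" using alpha_out[OF assms(1)] by fastforce
    ultimately show ?thesis by simp
  next
    case False
    hence "vsel m F = 1" unfolding vsel_def by simp
    moreover have "\<forall>w. alpha m F w \<le> 1"
    proof
      fix w have "\<not> 2 \<le> alpha m F w" using False by blast
      thus "alpha m F w \<le> 1" by simp
    qed
    hence "alpha m F 1 = 1" using all_le1[OF assms(1)] assms(2) by simp
    ultimately show ?thesis using assms(2) by simp
  qed
  thus "vsel m F \<in> {0..n}" "1 \<le> alpha m F (vsel m F)" by auto
qed

lemma card_lt_insert:
  assumes "finite F" "f \<notin> F"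
  shows "card {g\<in>insert f F. g < v} = card {g\<in>F. g < v} + (if f < v then 1 else 0)"
proof (cases "f < v")
  case True
  hence "{g\<in>insert f F. g < v} = insert f {g\<in>F. g < v}" by auto
  thus ?thesis using assms True by simp
next
  case False
  hence "{g\<in>insert f F. g < v} = {g\<in>F. g < v}" by auto
  thus ?thesis using False by simp
qed

lemma card_lt_remove:
  assumes "finite F" "v \<in> F"
  shows "card {g\<in>F. g < f} = card {g\<in>F - {v}. g < f} + (if v < f then 1 else 0)"
proof -
  have e: "insert v (F - {v}) = F" using assms(2) by auto
  have "card {g\<in>insert v (F - {v}). g < f} = card {g\<in>F - {v}. g < f} + (if v < f then 1 else 0)"
    by (rule card_lt_insert) (use assms in auto)
  thus ?thesis unfolding e .
qed

lemma card_lt_remove_self: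
  "card {g\<in>F - {v}. g < (v::nat)} = card {g\<in>F. g < v}"
  by (rule arg_cong[where f = card]) auto

definition hmap :: "nat \<Rightarrow> nat \<Rightarrow> (((nat \<Rightarrow> nat) \<times> nat set) \<Rightarrow> 'k::field) \<Rightarrow> (((nat \<Rightarrow> nat) \<times> nat set) \<Rightarrow> 'k)" where
  "hmap n i c = (\<lambda>(m, G). if (m, G) \<in> KB n (i + 1) \<and> vsel m G \<in> G
     then (-1) ^ card {g\<in>G. g < vsel m G} * c (m(vsel m G := Suc (m (vsel m G))), G - {vsel m G}) else 0)"

lemma hmap_out: "\<forall>b. b \<notin> KB n (i + 1) \<longrightarrow> hmap n i c b = 0"
  unfolding hmap_def by auto

lemma homotopy:
  fixes c :: "((nat \<Rightarrow> nat) \<times> nat set) \<Rightarrow> 'k::field"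
  assumes n1: "1 \<le> n" and i: "1 \<le> i" and c: "\<forall>b. b \<notin> KB n i \<longrightarrow> c b = 0"
    and dc: "kdiff {0..n} (GS n) i (n + 1) c = (\<lambda>_. 0)" and mF: "(m, F) \<in> KB n i"
    and ne: "vsel m F \<in> F \<longrightarrow> \<not> bad n (m(vsel m F := Suc (m (vsel m F))))"
  shows "kdiff {0..n} (GS n) (i + 1) (n + 1) (hmap n i c) (m, F) = c (m, F)"
proof -
  define v where "v = vsel m F"
  define A where "A = {f\<in>{0..n} - F. 1 \<le> m f}"
  have Fsub: "F \<subseteq> {0..n}" using mF by (auto simp: KB_iff KB_iff')
  have finF: "finite F" using finite_subset[OF Fsub] by simp
  have finA: "finite A" unfolding A_def by simp
  have vV: "v \<in> {0..n}" and av: "1 \<le> alpha m F v" using vsel_props[OF mF n1] unfolding v_def by auto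
  have mF': "(m, F) \<in> KB n (i + 1 - 1)" using mF by simp
  have LHS: "kdiff {0..n} (GS n) (i + 1) (n + 1) (hmap n i c) (m, F) =
     (\<Sum>f\<in>A. (-1) ^ card {g\<in>F. g < f} * hmap n i c (m(f := m f - 1), insert f F))"
    unfolding A_def by (rule kdiff_eval[OF _ mF' hmap_out]) simp
  have hval: "hmap n i c (m(f := m f - 1), insert f F) =
     (if v \<in> insert f F then (-1) ^ card {g\<in>insert f F. g < v} *
        c ((m(f := m f - 1))(v := Suc ((m(f := m f - 1)) v)), insert f F - {v}) else 0)"
    if f: "f \<in> A" for f
  proof -
    have "(m(f := m f - 1), insert f F) \<in> KB n (i + 1)"
      using KB_dec[OF mF'] f unfolding A_def by auto
    moreover have "vsel (m(f := m f - 1)) (insert f F) = v"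
      unfolding v_def using f unfolding A_def by (intro vsel_dec) auto
    ultimately show ?thesis unfolding hmap_def by simp
  qed
  show ?thesis
  proof (cases "v \<in> F")
    case False
    have mv: "1 \<le> m v" using av False unfolding alpha_def by simp
    have vA: "v \<in> A" unfolding A_def using vV False mv by simp
    have "kdiff {0..n} (GS n) (i + 1) (n + 1) (hmap n i c) (m, F) =
       (-1) ^ card {g\<in>F. g < v} * hmap n i c (m(v := m v - 1), insert v F)
       + (\<Sum>f\<in>A - {v}. (-1) ^ card {g\<in>F. g < f} * hmap n i c (m(f := m f - 1), insert f F))"
      unfolding LHS using finA vA by (simp add: sum.remove)
    also have "(\<Sum>f\<in>A - {v}. (-1) ^ card {g\<in>F. g < f} * hmap n i c (m(f := m f - 1), insert f F)) = 0"
      by (rule sum.neutral) (use hval False in auto)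
    also have "hmap n i c (m(v := m v - 1), insert v F) = (-1) ^ card {g\<in>F. g < v} * c (m, F)"
    proof -
      have e1: "(m(v := m v - 1))(v := Suc ((m(v := m v - 1)) v)) = m" using mv by auto
      have e2: "insert v F - {v} = F" using False by auto
      have e3: "{g\<in>insert v F. g < v} = {g\<in>F. g < v}" by auto
      show ?thesis using hval[OF vA] e1 e2 e3 by simp
    qed
    finally show ?thesis by (simp flip: power_add add: power_mult_distrib)
  next
    case True
    define b where "b = card {g\<in>F. g < v}"
    define X where "X f = ((m(v := Suc (m v)))(f := (m(v := Suc (m v))) f - 1), insert f (F - {v}))" for f
    have ncomp: "(m(v := Suc (m v)), F - {v}) \<in> KB n (i - 1)"
      using KB_inc[OF mF i True] ne True unfolding v_def by simp
    have A': "{f\<in>{0..n} - (F - {v}). 1 \<le> (m(v := Suc (m v))) f} = insert v A"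
      unfolding A_def using vV True by auto
    have vnA: "v \<notin> A" unfolding A_def using True by simp
    have "0 = kdiff {0..n} (GS n) i (n + 1) c (m(v := Suc (m v)), F - {v})" using dc by simp
    also have "\<dots> = (\<Sum>f\<in>insert v A. (-1) ^ card {g\<in>F - {v}. g < f} * c (X f))"
      unfolding X_def by (subst kdiff_eval[OF i ncomp c]) (simp only: A')
    also have "\<dots> = (-1) ^ b * c (m, F) + (\<Sum>f\<in>A. (-1) ^ card {g\<in>F - {v}. g < f} * c (X f))"
    proof -
      have "X v = (m, F)" unfolding X_def using True by (auto simp: insert_absorb)
      moreover have "(-1::'k) ^ card {g\<in>F - {v}. g < v} = (-1) ^ b"
        unfolding b_def card_lt_remove_self ..
      ultimately show ?thesis using finA vnA by simp
    qed
    finally have eq0: "(\<Sum>f\<in>A. (-1) ^ card {g\<in>F - {v}. g < f} * c (X f)) = - ((-1) ^ b * c (m, F))"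
      by (simp add: eq_neg_iff_add_eq_0 add.commute)
    have tm: "(-1) ^ card {g\<in>F. g < f} * hmap n i c (m(f := m f - 1), insert f F)
        = - ((-1) ^ b * ((-1) ^ card {g\<in>F - {v}. g < f} * c (X f)))" if f: "f \<in> A" for f
    proof -
      have fv: "f \<noteq> v" "f \<notin> F" using f vnA unfolding A_def by auto
      have eX: "((m(f := m f - 1))(v := Suc ((m(f := m f - 1)) v)), insert f F - {v}) = X f"
        unfolding X_def using fv by (auto simp: fun_eq_iff)
      have s1: "card {g\<in>F. g < f} = card {g\<in>F - {v}. g < f} + (if v < f then 1 else 0)"
        by (rule card_lt_remove[OF finF True])
      have s2: "card {g\<in>insert f F. g < v} = b + (if f < v then 1 else 0)"
        unfolding b_def by (rule card_lt_insert[OF finF fv(2)])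
      have h2: "hmap n i c (m(f := m f - 1), insert f F) = (-1) ^ card {g\<in>insert f F. g < v} * c (X f)"
        using hval[OF f, unfolded eX] True by simp
      have "(-1) ^ card {g\<in>F. g < f} * hmap n i c (m(f := m f - 1), insert f F)
          = (-1::'k) ^ (card {g\<in>F - {v}. g < f} + (if v < f then 1 else 0) + (b + (if f < v then 1 else 0))) * c (X f)"
        unfolding h2 s1 s2 by (simp add: power_add)
      also have "(card {g\<in>F - {v}. g < f} + (if v < f then 1 else 0) + (b + (if f < v then 1 else 0)))
          = Suc (card {g\<in>F - {v}. g < f} + b)" using fv(1) by auto
      finally show ?thesis by (simp add: power_add fun_upd_def mult_ac)
    qed
    have "kdiff {0..n} (GS n) (i + 1) (n + 1) (hmap n i c) (m, F)
       = (\<Sum>f\<in>A. - ((-1) ^ b * ((-1) ^ card {g\<in>F - {v}. g < f} * c (X f))))"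
      unfolding LHS by (rule sum.cong) (use tm in auto)
    also have "\<dots> = - ((-1) ^ b * (\<Sum>f\<in>A. (-1) ^ card {g\<in>F - {v}. g < f} * c (X f)))"
      by (simp add: sum_negf sum_distrib_left)
    also have "\<dots> = c (m, F)" unfolding eq0 by (simp flip: power_add add: power_mult_distrib mult.assoc[symmetric])
    finally show ?thesis .
  qed
qed

lemma antisym_sum_zero:
  fixes g :: "'a \<Rightarrow> 'a \<Rightarrow> 'b::ab_group_add"
  assumes "finite A" "\<forall>f\<in>A. \<forall>f'\<in>A. f \<noteq> f' \<longrightarrow> g f f' = - g f' f"
  shows "(\<Sum>f\<in>A. \<Sum>f'\<in>A - {f}. g f f') = 0"
  using assms
proof (induction A rule: finite_induct)
  case empty
  then show ?case by simp
next
  case (insert a A)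
  have IH: "(\<Sum>f\<in>A. \<Sum>f'\<in>A - {f}. g f f') = 0" using insert.IH insert.prems by blast
  have anti: "g f a = - g a f" if "f \<in> A" for f
    using insert.prems insert.hyps that by (metis insertCI)
  have "(\<Sum>f\<in>insert a A. \<Sum>f'\<in>insert a A - {f}. g f f')
      = (\<Sum>f'\<in>insert a A - {a}. g a f') + (\<Sum>f\<in>A. \<Sum>f'\<in>insert a A - {f}. g f f')"
    by (rule sum.insert[OF insert.hyps])
  also have "insert a A - {a} = A" using insert.hyps by auto
  also have "(\<Sum>f\<in>A. \<Sum>f'\<in>insert a A - {f}. g f f') = (\<Sum>f\<in>A. g f a + (\<Sum>f'\<in>A - {f}. g f f'))"
  proof (rule sum.cong)
    fix f assume f: "f \<in> A"
    hence e: "insert a A - {f} = insert a (A - {f})" using insert.hyps by auto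
    have na: "a \<notin> A - {f}" using insert.hyps by auto
    show "(\<Sum>f'\<in>insert a A - {f}. g f f') = g f a + (\<Sum>f'\<in>A - {f}. g f f')"
      unfolding e using sum.insert[of "A - {f}" a "g f"] na insert.hyps(1) by simp
  qed simp
  also have "\<dots> = (\<Sum>f\<in>A. g f a) + (\<Sum>f\<in>A. \<Sum>f'\<in>A - {f}. g f f')" by (rule sum.distrib)
  also have "(\<Sum>f\<in>A. g f a) = (\<Sum>f\<in>A. - g a f)" by (rule sum.cong) (auto simp: anti)
  also have "\<dots> = - (\<Sum>f\<in>A. g a f)" by (rule sum_negf)
  finally show ?case unfolding IH by simp
qed

lemma dd0:
  fixes c :: "((nat \<Rightarrow> nat) \<times> nat set) \<Rightarrow> 'k::field"
  assumes i: "1 \<le> i" and c: "\<forall>b. b \<notin> KB n (i + 1) \<longrightarrow> c b = 0"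
  shows "kdiff {0..n} (GS n) i (n + 1) (kdiff {0..n} (GS n) (i + 1) (n + 1) c) = (\<lambda>_. 0)"
proof
  fix x :: "(nat \<Rightarrow> nat) \<times> nat set"
  obtain m G where x: "x = (m, G)" by (cases x)
  show "kdiff {0..n} (GS n) i (n + 1) (kdiff {0..n} (GS n) (i + 1) (n + 1) c) x = 0"
  proof (cases "(m, G) \<in> KB n (i - 1)")
    case False
    thus ?thesis unfolding x by (rule kdiff_out)
  next
    case True
    define A where "A = {f\<in>{0..n} - G. 1 \<le> m f}"
    have Gsub: "G \<subseteq> {0..n}" using True by (auto simp: KB_iff KB_iff')
    have finG: "finite G" using finite_subset[OF Gsub] by simp
    have finA: "finite A" unfolding A_def by simp
    have dco: "\<forall>b. b \<notin> KB n i \<longrightarrow> kdiff {0..n} (GS n) (i + 1) (n + 1) c b = 0"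
    proof (intro allI impI)
      fix b assume "b \<notin> KB n i"
      thus "kdiff {0..n} (GS n) (i + 1) (n + 1) c b = 0" using kdiff_out'[of b n "i + 1"] by simp
    qed
    define g where "g f f' = (-1) ^ card {g\<in>G. g < f} * ((-1) ^ card {g\<in>insert f G. g < f'} *
        c ((m(f := m f - 1))(f' := (m(f := m f - 1)) f' - 1), insert f' (insert f G)))" for f f'
    have "kdiff {0..n} (GS n) i (n + 1) (kdiff {0..n} (GS n) (i + 1) (n + 1) c) (m, G)
        = (\<Sum>f\<in>A. (-1) ^ card {g\<in>G. g < f} * kdiff {0..n} (GS n) (i + 1) (n + 1) c (m(f := m f - 1), insert f G))"
      unfolding A_def by (rule kdiff_eval[OF i True dco])
    also have "\<dots> = (\<Sum>f\<in>A. \<Sum>f'\<in>A - {f}. (g f f' :: 'k))"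
    proof (rule sum.cong)
      fix f assume f: "f \<in> A"
      have mem: "(m(f := m f - 1), insert f G) \<in> KB n (i + 1 - 1)"
        using KB_dec[OF True i] f unfolding A_def by simp
      have idx: "{f'\<in>{0..n} - insert f G. 1 \<le> (m(f := m f - 1)) f'} = A - {f}"
        unfolding A_def by auto
      show "(-1) ^ card {g\<in>G. g < f} * kdiff {0..n} (GS n) (i + 1) (n + 1) c (m(f := m f - 1), insert f G)
          = (\<Sum>f'\<in>A - {f}. g f f')"
      proof -
        have "kdiff {0..n} (GS n) (i + 1) (n + 1) c (m(f := m f - 1), insert f G) =
          (\<Sum>f'\<in>{f'\<in>{0..n} - insert f G. 1 \<le> (m(f := m f - 1)) f'}. (-1) ^ card {g\<in>insert f G. g < f'} *
             c ((m(f := m f - 1))(f' := (m(f := m f - 1)) f' - 1), insert f' (insert f G)))"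
          by (rule kdiff_eval[OF _ mem c]) simp
        thus ?thesis unfolding idx g_def by (simp add: sum_distrib_left)
      qed
    qed simp
    also have "\<dots> = 0"
    proof (rule antisym_sum_zero[OF finA], intro ballI impI)
      fix f f' assume f: "f \<in> A" "f' \<in> A" "f \<noteq> f'"
      have fG: "f \<notin> G" "f' \<notin> G" using f unfolding A_def by auto
      have e1: "(m(f := m f - 1))(f' := (m(f := m f - 1)) f' - 1) = (m(f' := m f' - 1))(f := (m(f' := m f' - 1)) f - 1)"
        using f(3) by (auto simp: fun_eq_iff)
      have e2: "insert f' (insert f G) = insert f (insert f' G)" by auto
      have s1: "card {g\<in>insert f G. g < f'} = card {g\<in>G. g < f'} + (if f < f' then 1 else 0)"
        by (rule card_lt_insert[OF finG fG(1)])
      have s2: "card {g\<in>insert f' G. g < f} = card {g\<in>G. g < f} + (if f' < f then 1 else 0)"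
        by (rule card_lt_insert[OF finG fG(2)])
      have "(if f < f' then 1 else 0) + (if f' < f then 1 else (0::nat)) = 1" using f(3) by auto
      hence "(-1::'k) ^ (if f < f' then 1 else 0) = - ((-1) ^ (if f' < f then 1 else 0))"
        using f(3) by (cases "f < f'") auto
      moreover
      define X where "X = c ((m(f := m f - 1))(f' := (m(f := m f - 1)) f' - 1), insert f' (insert f G))"
      have X': "c ((m(f' := m f' - 1))(f := (m(f' := m f' - 1)) f - 1), insert f (insert f' G)) = X"
        unfolding X_def e1 e2 ..
      have g1: "g f f' = (-1)^card {g\<in>G. g < f} * ((-1)^card {g\<in>G. g < f'} * (-1)^(if f < f' then 1 else 0) * X)"
        unfolding g_def s1 X_def power_add by (simp only: mult.assoc)
      have g2: "g f' f = (-1)^card {g\<in>G. g < f'} * ((-1)^card {g\<in>G. g < f} * (-1)^(if f' < f then 1 else 0) * X)"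
        unfolding g_def s2 X' power_add by (simp only: mult.assoc)
      ultimately show "g f f' = - g f' f"
        unfolding g1 g2 by (simp add: algebra_simps)
    qed
    finally show ?thesis unfolding x .
  qed
qed

definition e0k :: "nat \<Rightarrow> nat \<Rightarrow> nat" where
  "e0k k = (\<lambda>w. if w = 0 \<or> w = k then 1 else 0)"

definition Exc :: "nat \<Rightarrow> ((nat \<Rightarrow> nat) \<times> nat set) set" where
  "Exc n = (\<lambda>k. (e0k k, {0..n} - {0, k})) ` {2..n}"

lemma exc_char:
  assumes mF: "(m, F) \<in> KB n i" and n1: "1 \<le> n" and vF: "vsel m F \<in> F"
    and b: "bad n (m(vsel m F := Suc (m (vsel m F))))"
  shows "(m, F) \<in> Exc n"
proof -
  have h: "mono_supp {0..n} m" "\<not> bad n m" "F \<subseteq> {0..n}" using mF by (auto simp: KB_iff KB_iff')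
  show ?thesis
  proof (cases "\<exists>w. 2 \<le> alpha m F w")
    case True
    define v where "v = vsel m F"
    have "2 \<le> alpha m F v" unfolding v_def vsel_def using LeastI_ex[OF True] True by simp
    hence "0 < m v" using vF unfolding v_def[symmetric] alpha_def by simp
    hence "\<forall>w. 0 < (m(v := Suc (m v))) w \<longrightarrow> 0 < m w" by auto
    hence "bad n m" using bad_mono[of n "m(v := Suc (m v))" m] b unfolding v_def by blast
    thus ?thesis using h by simp
  next
    case False
    have le1: "\<forall>w. alpha m F w \<le> 1"
    proof
      fix w have "\<not> 2 \<le> alpha m F w" using False by blast
      thus "alpha m F w \<le> 1" by simp
    qed
    have a1: "alpha m F w = 1" if "w \<in> {0..n}" for w using all_le1[OF mF le1 that] .
    have v1: "vsel m F = 1" unfolding vsel_def using False by simp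
    have oneF: "1 \<in> F" using vF v1 by simp
    have m1: "m 1 = 0" using a1[of 1] n1 oneF unfolding alpha_def by simp
    from b v1 obtain a c where ac: "a\<in>{1..n}" "c\<in>{1..n}" "a \<noteq> c" "0 < (m(1 := Suc (m 1))) a"
       "0 < (m(1 := Suc (m 1))) c" "0 < m 0"
      unfolding bad_def by auto
    obtain k where k: "k \<in> {2..n}" "0 < m k"
    proof (cases "a = 1")
      case True
      hence "c \<noteq> 1" using ac by simp
      thus ?thesis using that[of c] ac by auto
    next
      case False
      thus ?thesis using that[of a] ac by auto
    qed
    have m0: "m 0 = 1" "0 \<notin> F" using a1[of 0] ac(6) unfolding alpha_def by (auto split: if_splits)
    have mk: "m k = 1" "k \<notin> F" using a1[of k] k unfolding alpha_def by (auto split: if_splits)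
    have mw: "m w = 0" if "w \<noteq> 0" "w \<noteq> k" for w
    proof (rule ccontr)
      assume "m w \<noteq> 0"
      moreover have "w \<in> {0..n}" using h(1) \<open>m w \<noteq> 0\<close> unfolding mono_supp_def by auto
      ultimately have "bad n m" unfolding bad_def using that k m0 mk
        by (intro conjI bexI[of _ w] bexI[of _ k]) auto
      thus False using h by simp
    qed
    have "m = e0k k" unfolding e0k_def using m0 mk mw by (auto simp: fun_eq_iff)
    moreover have "F = {0..n} - {0, k}"
    proof
      show "F \<subseteq> {0..n} - {0, k}" using h(3) m0 mk by auto
      show "{0..n} - {0, k} \<subseteq> F"
      proof
        fix w assume w: "w \<in> {0..n} - {0, k}"
        hence "alpha m F w = 1" "m w = 0" using a1 mw by auto
        thus "w \<in> F" unfolding alpha_def by (auto split: if_splits)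
      qed
    qed
    ultimately show ?thesis unfolding Exc_def using k by blast
  qed
qed

lemma Exc_card_F: "(m, F) \<in> Exc n \<Longrightarrow> card F = n - 1"
  unfolding Exc_def by (auto simp: card_Diff_subset)

lemma Exc_KB: assumes "2 \<le> n" shows "Exc n \<subseteq> KB n (n - 1)"
proof
  fix x assume "x \<in> Exc n"
  then obtain k where k: "k \<in> {2..n}" "x = (e0k k, {0..n} - {0, k})" unfolding Exc_def by auto
  have "\<not> bad n (e0k k)" unfolding bad_def e0k_def by auto
  moreover have "mono_supp {0..n} (e0k k)" unfolding mono_supp_def e0k_def using k by auto
  moreover have "mono_deg {0..n} (e0k k) = 2"
  proof -
    have "mono_deg {0..n} (e0k k) = (\<Sum>w\<in>{0..n}. if w \<in> {0, k} then 1 else 0)"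
      unfolding mono_deg_def e0k_def by (rule sum.cong) auto
    also have "\<dots> = (\<Sum>w\<in>{0..n} \<inter> {0, k}. 1)" by (rule sum.inter_restrict[symmetric]) simp
    also have "\<dots> = card ({0..n} \<inter> {0, k})" by simp
    also have "{0..n} \<inter> {0, k} = {0, k}" using k by auto
    finally show ?thesis using k by simp
  qed
  moreover have "card ({0..n} - {0, k}) = n - 1" using k by (simp add: card_Diff_subset)
  ultimately show "x \<in> KB n (n - 1)" unfolding k(2) KB_iff using k assms by auto
qed

lemma card_Exc: "card (Exc n) = n - 1"
proof -
  have "inj_on (\<lambda>k. (e0k k, {0..n} - {0, k})) {2..n}"
  proof (rule inj_onI)
    fix k k' assume "k \<in> {2..n}" "k' \<in> {2..n}" "(e0k k, {0..n} - {0, k}) = (e0k k', {0..n} - {0, k'})"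
    hence "e0k k k = e0k k' k" by simp
    thus "k = k'" using \<open>k \<in> {2..n}\<close> unfolding e0k_def by (auto split: if_splits)
  qed
  thus ?thesis unfolding Exc_def by (simp add: card_image)
qed

lemma finite_Exc: "finite (Exc n)" unfolding Exc_def by simp

definition dlt :: "'a \<Rightarrow> 'a \<Rightarrow> 'k::field" where
  "dlt x = (\<lambda>y. if y = x then 1 else 0)"

lemma fsum_apply: "(\<Sum>x\<in>A. f x) y = (\<Sum>x\<in>A. f x y)"
  by (induction A rule: infinite_finite_induct) auto

lemma chains_span:
  fixes c :: "'a \<Rightarrow> 'k::field"
  assumes "finite K" "\<forall>b. b \<notin> K \<longrightarrow> c b = 0"
  shows "c \<in> kv.span (dlt ` K)"
proof -
  have "c = (\<Sum>x\<in>K. kscale (c x) (dlt x))"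
  proof
    fix y
    have "(\<Sum>x\<in>K. kscale (c x) (dlt x)) y = (\<Sum>x\<in>K. if y = x then c x else 0)"
      unfolding fsum_apply kscale_def dlt_def by (rule sum.cong) auto
    also have "\<dots> = c y" using assms by (simp add: sum.delta)
    finally show "c y = (\<Sum>x\<in>K. kscale (c x) (dlt x)) y" by simp
  qed
  also have "\<dots> \<in> kv.span (dlt ` K)"
    by (intro kv.span_sum kv.span_scale kv.span_base) auto
  finally show ?thesis .
qed

lemma kdiff_add: "kdiff V Gs i j (c1 + c2) = kdiff V Gs i j c1 + kdiff V Gs i j c2"
  unfolding kdiff_def by (auto simp: fun_eq_iff sum.distrib distrib_left)

lemma kdiff_scale: "kdiff V Gs i j (kscale a c) = kscale a (kdiff V Gs i j c)"
  unfolding kdiff_def kscale_def by (auto simp: fun_eq_iff sum_distrib_left mult_ac)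

lemma kdiff_zero: "kdiff V Gs i j 0 = 0"
  unfolding kdiff_def by (auto simp: fun_eq_iff)

lemma kchains_iff: "c \<in> kchains K V Gs i j \<longleftrightarrow> (\<forall>b. b \<notin> kbasis V Gs i j \<longrightarrow> c b = 0)"
  unfolding kchains_def by simp

lemma exc_cycle:
  fixes c :: "((nat \<Rightarrow> nat) \<times> nat set) \<Rightarrow> 'k::field"
  assumes n2: "2 \<le> n" and c: "\<forall>y. y \<notin> Exc n \<longrightarrow> c y = 0"
  shows "kdiff {0..n} (GS n) (n - 1) (n + 1) c = (\<lambda>_. 0)"
proof
  fix x :: "(nat \<Rightarrow> nat) \<times> nat set"
  obtain m G where x: "x = (m, G)" by (cases x)
  show "kdiff {0..n} (GS n) (n - 1) (n + 1) c x = 0"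
  proof (cases "(m, G) \<in> KB n (n - 1 - 1)")
    case False
    thus ?thesis unfolding x by (rule kdiff_out)
  next
    case True
    have c': "\<forall>b. b \<notin> KB n (n - 1) \<longrightarrow> c b = 0" using c Exc_KB[OF n2] by blast
    have nb: "\<not> bad n m" using True by (auto simp: KB_iff KB_iff')
    have "kdiff {0..n} (GS n) (n - 1) (n + 1) c (m, G) =
      (\<Sum>f\<in>{f\<in>{0..n} - G. 1 \<le> m f}. (-1) ^ card {g\<in>G. g < f} * c (m(f := m f - 1), insert f G))"
      by (rule kdiff_eval[OF _ True c']) (use n2 in simp)
    also have "\<dots> = 0"
    proof (rule sum.neutral, rule ballI)
      fix f assume f: "f \<in> {f\<in>{0..n} - G. 1 \<le> m f}"
      have "(m(f := m f - 1), insert f G) \<notin> Exc n"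
      proof
        assume "(m(f := m f - 1), insert f G) \<in> Exc n"
        then obtain k where k: "k \<in> {2..n}" "m(f := m f - 1) = e0k k" "insert f G = {0..n} - {0, k}"
          unfolding Exc_def by auto
        have "f \<in> {0..n} - {0, k}" using k(3) by blast
        hence fk: "f \<noteq> 0" "f \<noteq> k" by simp_all
        have "m 0 = 1" "m k = 1" using fun_cong[OF k(2), of 0] fun_cong[OF k(2), of k] fk
          unfolding e0k_def by (auto split: if_splits)
        hence "bad n m" unfolding bad_def using k(1) fk f
          by (intro conjI bexI[of _ k] bexI[of _ f]) auto
        thus False using nb by simp
      qed
      thus "(-1) ^ card {g\<in>G. g < f} * c (m(f := m f - 1), insert f G) = 0" using c by simp
    qed
    finally show ?thesis unfolding x .
  qed
qed

definition Ypt :: "nat \<Rightarrow> nat \<Rightarrow> nat \<Rightarrow> (nat \<Rightarrow> nat) \<times> nat set" where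
  "Ypt n a c = ((\<lambda>x. if x = a \<or> x = c then 1 else 0), {0..n} - {a, c})"

lemma Ypt_KB:
  assumes "a < c" "c \<le> n"
  shows "Ypt n a c \<in> KB n (n - 1)"
proof -
  let ?m = "(\<lambda>x. if x = a \<or> x = c then 1 else 0) :: nat \<Rightarrow> nat"
  have "\<not> bad n ?m" unfolding bad_def by auto
  moreover have "mono_supp {0..n} ?m" unfolding mono_supp_def using assms by auto
  moreover have "mono_deg {0..n} ?m = 2"
  proof -
    have "mono_deg {0..n} ?m = (\<Sum>w\<in>{0..n}. if w \<in> {a, c} then 1 else 0)"
      unfolding mono_deg_def by (rule sum.cong) auto
    also have "\<dots> = (\<Sum>w\<in>{0..n} \<inter> {a, c}. 1)" by (rule sum.inter_restrict[symmetric]) simp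
    also have "{0..n} \<inter> {a, c} = {a, c}" using assms by auto
    finally show ?thesis using assms by simp
  qed
  moreover have "card ({0..n} - {a, c}) = n - 1" using assms by (simp add: card_Diff_subset)
  ultimately show ?thesis unfolding Ypt_def KB_iff using assms by auto
qed

lemma card_below_a:
  assumes "a < c" "c \<le> n"
  shows "card {g\<in>{0..n} - {a, c}. g < a} = a"
proof -
  have "{g\<in>{0..n} - {a, c}. g < a} = {0..<a}" using assms by auto
  thus ?thesis by simp
qed

lemma card_below_c:
  assumes "a < c" "c \<le> n"
  shows "card {g\<in>{0..n} - {a, c}. g < c} = c - 1"
proof -
  have "{g\<in>{0..n} - {a, c}. g < c} = {0..<c} - {a}" using assms by auto
  thus ?thesis using assms by simp
qed

lemma bnd_formula:
  fixes w :: "((nat \<Rightarrow> nat) \<times> nat set) \<Rightarrow> 'k::field"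
  assumes w: "\<forall>b. b \<notin> KB n n \<longrightarrow> w b = 0" and ac: "a < c" "c \<le> n"
  shows "kdiff {0..n} (GS n) n (n + 1) w (Ypt n a c) =
     (-1) ^ a * w ((\<lambda>x. if x = c then 1 else 0), {0..n} - {c})
     + (-1) ^ (c - 1) * w ((\<lambda>x. if x = a then 1 else 0), {0..n} - {a})"
proof -
  let ?m = "(\<lambda>x. if x = a \<or> x = c then 1 else 0) :: nat \<Rightarrow> nat"
  let ?G = "{0..n} - {a, c}"
  have n1: "1 \<le> n" using ac by simp
  have mem: "(?m, ?G) \<in> KB n (n - 1)" using Ypt_KB[OF ac] unfolding Ypt_def .
  have idx: "{f\<in>{0..n} - ?G. 1 \<le> ?m f} = {a, c}" using ac by auto
  have "kdiff {0..n} (GS n) n (n + 1) w (Ypt n a c) =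
     (\<Sum>f\<in>{f\<in>{0..n} - ?G. 1 \<le> ?m f}. (-1) ^ card {g\<in>?G. g < f} * w (?m(f := ?m f - 1), insert f ?G))"
    unfolding Ypt_def by (rule kdiff_eval[OF n1 mem w])
  also have "\<dots> = (-1) ^ card {g\<in>?G. g < a} * w (?m(a := ?m a - 1), insert a ?G)
      + (-1) ^ card {g\<in>?G. g < c} * w (?m(c := ?m c - 1), insert c ?G)"
    unfolding idx using ac by simp
  also have "?m(a := ?m a - 1) = (\<lambda>x. if x = c then 1 else 0)" using ac by (auto simp: fun_eq_iff)
  also have "?m(c := ?m c - 1) = (\<lambda>x. if x = a then 1 else 0)" using ac by (auto simp: fun_eq_iff)
  also have "insert a ?G = {0..n} - {c}" using ac by auto
  also have "insert c ?G = {0..n} - {a}" using ac by auto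
  finally show ?thesis unfolding card_below_a[OF ac] card_below_c[OF ac] .
qed

lemma Ypt_not_Exc01: "Ypt n 0 1 \<notin> Exc n"
proof
  assume "Ypt n 0 1 \<in> Exc n"
  then obtain k where k: "k \<in> {2..n}" "Ypt n 0 1 = (e0k k, {0..n} - {0, k})" unfolding Exc_def by auto
  hence "fst (Ypt n 0 1) 1 = e0k k 1" by simp
  thus False using k(1) unfolding Ypt_def e0k_def by auto
qed

lemma Ypt_not_Exc1k: assumes "1 < c" shows "Ypt n 1 c \<notin> Exc n"
proof
  assume "Ypt n 1 c \<in> Exc n"
  then obtain k where k: "k \<in> {2..n}" "Ypt n 1 c = (e0k k, {0..n} - {0, k})" unfolding Exc_def by auto
  hence "fst (Ypt n 1 c) 0 = e0k k 0" by simp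
  thus False using k(1) assms unfolding Ypt_def e0k_def by (auto split: if_splits)
qed

lemma bnd_zero:
  fixes w :: "((nat \<Rightarrow> nat) \<times> nat set) \<Rightarrow> 'k::field"
  assumes n2: "2 \<le> n" and w: "\<forall>b. b \<notin> KB n n \<longrightarrow> w b = 0"
    and hb: "\<forall>y. y \<notin> Exc n \<longrightarrow> kdiff {0..n} (GS n) n (n + 1) w y = 0"
  shows "kdiff {0..n} (GS n) n (n + 1) w = (\<lambda>_. 0)"
proof
  fix x :: "(nat \<Rightarrow> nat) \<times> nat set"
  define u where "u a = w ((\<lambda>x. if x = a then 1 else 0), {0..n} - {a})" for a
  show "kdiff {0..n} (GS n) n (n + 1) w x = 0"
  proof (cases "x \<in> Exc n")
    case False
    show ?thesis by (rule hb[rule_format, OF False])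
  next
    case True
    then obtain k where k: "k \<in> {2..n}" "x = (e0k k, {0..n} - {0, k})" unfolding Exc_def by auto
    have xY: "x = Ypt n 0 k" unfolding k(2) Ypt_def e0k_def by simp
    define p where "p = (-1::'k) ^ (k - 1)"
    have e1: "u 1 + u 0 = 0"
      using bnd_formula[OF w, of 0 1] hb[rule_format, OF Ypt_not_Exc01[of n]] n2 unfolding u_def by simp
    have e2: "- u k + p * u 1 = 0"
      using bnd_formula[OF w, of 1 k] hb[rule_format, OF Ypt_not_Exc1k[of k n]] k(1) unfolding u_def p_def by simp
    have "kdiff {0..n} (GS n) n (n + 1) w x = u k + p * u 0"
      unfolding xY using bnd_formula[OF w, of 0 k] k(1) unfolding u_def p_def by simp
    also have "\<dots> = 0"
    proof -
      have "u 1 = - u 0" using e1 by (simp add: eq_neg_iff_add_eq_0)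
      moreover have "u k = p * u 1" using e2 by simp
      ultimately show ?thesis by simp
    qed
    finally show ?thesis .
  qed
qed

lemma span_Exc_zero:
  assumes "y \<in> kv.span (dlt ` Exc n :: (((nat \<Rightarrow> nat) \<times> nat set) \<Rightarrow> 'k::field) set)"
  shows "\<forall>b. b \<notin> Exc n \<longrightarrow> y b = 0"
proof -
  let ?T = "{c :: ((nat \<Rightarrow> nat) \<times> nat set) \<Rightarrow> 'k. \<forall>b. b \<notin> Exc n \<longrightarrow> c b = 0}"
  have "kv.subspace ?T" by (rule kv.subspaceI) (auto simp: kscale_def)
  moreover have "dlt ` Exc n \<subseteq> ?T" unfolding dlt_def by auto
  ultimately have "kv.span (dlt ` Exc n) \<subseteq> ?T" by (rule kv.span_minimal[rotated])
  thus ?thesis using assms by blast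
qed

lemma indep_dlt:
  "kv.independent (dlt ` K :: ('a \<Rightarrow> 'k::field) set)"
  unfolding kv.independent_explicit_module
proof (intro allI impI)
  fix t u v
  assume t: "finite t" "t \<subseteq> (dlt ` K :: ('a \<Rightarrow> 'k) set)" "(\<Sum>v\<in>t. kscale (u v) v) = 0" "v \<in> t"
  obtain x where x: "v = dlt x" using t by auto
  have "0 = (\<Sum>v\<in>t. kscale (u v) v) x" using t(3) by simp
  also have "\<dots> = (\<Sum>v'\<in>t. u v' * v' x)" unfolding fsum_apply kscale_def ..
  also have "\<dots> = u v * v x + (\<Sum>v'\<in>t - {v}. u v' * v' x)" using t by (simp add: sum.remove)
  also have "(\<Sum>v'\<in>t - {v}. u v' * v' x) = 0"
  proof (rule sum.neutral, rule ballI)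
    fix v' assume v': "v' \<in> t - {v}"
    then obtain x' where x': "v' = dlt x'" using t by auto
    have "x' \<noteq> x" using v' x x' by auto
    thus "u v' * v' x = 0" unfolding x' dlt_def by simp
  qed
  finally show "u v = 0" unfolding x dlt_def by simp
qed

lemma card_dlt: "card (dlt ` K :: ('a \<Rightarrow> 'k::field) set) = card K"
proof (rule card_image, rule inj_onI)
  fix x y assume "(dlt x :: 'a \<Rightarrow> 'k) = dlt y"
  hence "(dlt x :: 'a \<Rightarrow> 'k) x = dlt y x" by simp
  thus "x = y" unfolding dlt_def by (auto split: if_splits)
qed

theorem mainTheorem15:
  fixes n i :: nat
  assumes "n \<ge> 2" and "i \<ge> 1"
  shows "betti TYPE('k::field) {0..n} (path3_gens {0..n} (star_edge n)) i (n + 1)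
           = (if n + 1 = i + 2 then i else 0)"
proof -
  have n2: "2 \<le> n" and i1: "1 \<le> i" using assms by auto
  have n1: "1 \<le> n" using n2 by simp
  define Zs where "Zs = {c \<in> kchains TYPE('k) {0..n} (GS n) i (n + 1).
      (kdiff {0..n} (GS n) i (n + 1) c :: _ \<Rightarrow> 'k) = (\<lambda>_. 0)}"
  define Bs where "Bs = (kdiff {0..n} (GS n) (i + 1) (n + 1) :: _ \<Rightarrow> _ \<Rightarrow> 'k) ` kchains TYPE('k) {0..n} (GS n) (i + 1) (n + 1)"
  have betti_eq: "betti TYPE('k) {0..n} (GS n) i (n + 1) = kv.dim Zs - kv.dim Bs"
    unfolding betti_def Zs_def Bs_def ..
  have dch: "kdiff {0..n} (GS n) (i + 1) (n + 1) w \<in> kchains TYPE('k) {0..n} (GS n) i (n + 1)" for w :: "_ \<Rightarrow> 'k"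
    unfolding kchains_iff
  proof (intro allI impI)
    fix b assume "b \<notin> KB n i"
    thus "kdiff {0..n} (GS n) (i + 1) (n + 1) w b = 0" using kdiff_out'[of b n "i + 1"] by simp
  qed
  have BZ: "Bs \<subseteq> Zs"
  proof
    fix b assume "b \<in> Bs"
    then obtain w where w: "w \<in> kchains TYPE('k) {0..n} (GS n) (i + 1) (n + 1)" "b = kdiff {0..n} (GS n) (i + 1) (n + 1) w"
      unfolding Bs_def by auto
    have "kdiff {0..n} (GS n) i (n + 1) b = (\<lambda>_. 0)"
      unfolding w(2) by (rule dd0[OF i1]) (use w(1) in \<open>simp add: kchains_iff\<close>)
    thus "b \<in> Zs" unfolding Zs_def using dch w(2) by simp
  qed
  have zc: "\<forall>b. b \<notin> KB n i \<longrightarrow> z b = 0" if "z \<in> Zs" for z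
    using that unfolding Zs_def kchains_iff by simp
  have zd: "kdiff {0..n} (GS n) i (n + 1) z = (\<lambda>_. 0)" if "z \<in> Zs" for z
    using that unfolding Zs_def by simp
  have homo: "kdiff {0..n} (GS n) (i + 1) (n + 1) (hmap n i z) x = z x"
    if z: "z \<in> Zs" and x: "x \<in> KB n i" "x \<notin> Exc n" for z x
  proof -
    obtain m F where mF: "x = (m, F)" by (cases x)
    have ne: "vsel m F \<in> F \<longrightarrow> \<not> bad n (m(vsel m F := Suc (m (vsel m F))))"
      using exc_char[of m F n i] x n1 unfolding mF by blast
    show ?thesis unfolding mF by (rule homotopy[OF n1 i1 zc[OF z] zd[OF z] x(1)[unfolded mF] ne])
  qed
  have hch: "hmap n i z \<in> kchains TYPE('k) {0..n} (GS n) (i + 1) (n + 1)" for z :: "_ \<Rightarrow> 'k"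
    unfolding kchains_iff using hmap_out by simp
  have dout: "kdiff {0..n} (GS n) (i + 1) (n + 1) (hmap n i z) x = 0" if "x \<notin> KB n i" for z :: "_ \<Rightarrow> 'k" and x
    using kdiff_out'[of x n "i + 1"] that by simp
  have decomp: "\<forall>b. b \<notin> Exc n \<longrightarrow> (z - kdiff {0..n} (GS n) (i + 1) (n + 1) (hmap n i z)) b = 0"
    if z: "z \<in> Zs" for z
  proof (intro allI impI)
    fix b assume b: "b \<notin> Exc n"
    show "(z - kdiff {0..n} (GS n) (i + 1) (n + 1) (hmap n i z)) b = 0"
    proof (cases "b \<in> KB n i")
      case True
      thus ?thesis using homo[OF z True b] by simp
    next
      case False
      show ?thesis using dout[OF False] zc[OF z, rule_format, OF False] by simp
    qed
  qed
  show ?thesis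
  proof (cases "i = n - 1")
    case False
    have noexc: "KB n i \<inter> Exc n = {}"
    proof (rule ccontr)
      assume "KB n i \<inter> Exc n \<noteq> {}"
      then obtain m F where mF: "(m, F) \<in> KB n i" "(m, F) \<in> Exc n" by auto
      have "card F = i" using mF(1) by (simp add: KB_iff KB_iff')
      moreover have "card F = n - 1" using Exc_card_F[OF mF(2)] .
      ultimately have "i = n - 1" by simp
      thus False using False by simp
    qed
    have "Zs \<subseteq> Bs"
    proof
      fix z assume z: "z \<in> Zs"
      have "z = kdiff {0..n} (GS n) (i + 1) (n + 1) (hmap n i z)"
      proof
        fix b
        have "(z - kdiff {0..n} (GS n) (i + 1) (n + 1) (hmap n i z)) b = 0"
        proof (cases "b \<in> Exc n")
          case True
          hence b': "b \<notin> KB n i" using noexc by blast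
          show ?thesis using dout[OF b'] zc[OF z, rule_format, OF b'] by simp
        next
          case False
          thus ?thesis using decomp[OF z] by blast
        qed
        thus "z b = kdiff {0..n} (GS n) (i + 1) (n + 1) (hmap n i z) b" by simp
      qed
      thus "z \<in> Bs" unfolding Bs_def using hch by blast
    qed
    hence "Zs = Bs" using BZ by blast
    thus ?thesis unfolding betti_eq using False by auto
  next
    case True
    have iS: "i + 1 = n" using True n2 by simp
    let ?D = "dlt ` Exc n :: (((nat \<Rightarrow> nat) \<times> nat set) \<Rightarrow> 'k) set"
    have spD: "y \<in> Zs" if y: "y \<in> kv.span ?D" for y
    proof -
      have y0: "\<forall>b. b \<notin> Exc n \<longrightarrow> y b = 0" by (rule span_Exc_zero[OF y])
      have "y \<in> kchains TYPE('k) {0..n} (GS n) i (n + 1)"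
        unfolding kchains_iff using y0 Exc_KB[OF n2] True by blast
      moreover have "kdiff {0..n} (GS n) i (n + 1) y = (\<lambda>_. 0)"
        unfolding True by (rule exc_cycle[OF n2 y0])
      ultimately show ?thesis unfolding Zs_def by simp
    qed
    have sB: "kv.subspace Bs"
    proof (rule kv.subspaceI)
      show "0 \<in> Bs" unfolding Bs_def
        by (rule image_eqI[of _ _ 0]) (auto simp: kdiff_zero kchains_iff)
      fix x y assume "x \<in> Bs" "y \<in> Bs"
      then obtain x' y' where "x = kdiff {0..n} (GS n) (i + 1) (n + 1) x'" "y = kdiff {0..n} (GS n) (i + 1) (n + 1) y'"
        "x' \<in> kchains TYPE('k) {0..n} (GS n) (i + 1) (n + 1)" "y' \<in> kchains TYPE('k) {0..n} (GS n) (i + 1) (n + 1)"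
        unfolding Bs_def by auto
      thus "x + y \<in> Bs" unfolding Bs_def
        by (intro image_eqI[of _ _ "x' + y'"]) (auto simp: kdiff_add kchains_iff)
    next
      fix c x assume "x \<in> Bs"
      then obtain x' where "x = kdiff {0..n} (GS n) (i + 1) (n + 1) x'"
        "x' \<in> kchains TYPE('k) {0..n} (GS n) (i + 1) (n + 1)"
        unfolding Bs_def by auto
      thus "kscale c x \<in> Bs" unfolding Bs_def
      proof (intro image_eqI[of _ _ "kscale c x'"])
        show "kscale c x = kdiff {0..n} (GS n) (i + 1) (n + 1) (kscale c x')"
          using \<open>x = _\<close> by (simp add: kdiff_scale)
        show "kscale c x' \<in> kchains TYPE('k) {0..n} (GS n) (i + 1) (n + 1)"
          using \<open>x' \<in> _\<close> by (auto simp: kchains_iff kscale_def)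
      qed
    qed
    have BT: "Bs \<subseteq> kv.span (dlt ` KB n i)"
    proof
      fix b assume "b \<in> Bs"
      hence "b \<in> Zs" using BZ by blast
      thus "b \<in> kv.span (dlt ` KB n i)" using chains_span[OF finite_KB zc] by blast
    qed
    have Zeq: "Zs = {x + y | x y. x \<in> Bs \<and> y \<in> kv.span ?D}"
    proof
      show "Zs \<subseteq> {x + y | x y. x \<in> Bs \<and> y \<in> kv.span ?D}"
      proof
        fix z assume z: "z \<in> Zs"
        let ?x = "kdiff {0..n} (GS n) (i + 1) (n + 1) (hmap n i z)"
        have "?x \<in> Bs" unfolding Bs_def using hch by blast
        moreover have "z - ?x \<in> kv.span ?D" by (rule chains_span[OF finite_Exc decomp[OF z]])
        moreover have "z = ?x + (z - ?x)" by simp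
        ultimately show "z \<in> {x + y | x y. x \<in> Bs \<and> y \<in> kv.span ?D}" by blast
      qed
    next
      show "{x + y | x y. x \<in> Bs \<and> y \<in> kv.span ?D} \<subseteq> Zs"
      proof clarify
        fix x y assume xy: "x \<in> Bs" "y \<in> kv.span ?D"
        have "x \<in> Zs" "y \<in> Zs" using xy BZ spD by auto
        thus "x + y \<in> Zs" unfolding Zs_def by (auto simp: kchains_iff kdiff_add)
      qed
    qed
    have int: "Bs \<inter> kv.span ?D \<subseteq> {0}"
    proof
      fix b assume b: "b \<in> Bs \<inter> kv.span ?D"
      then obtain w where w: "w \<in> kchains TYPE('k) {0..n} (GS n) n (n + 1)" "b = kdiff {0..n} (GS n) n (n + 1) w"
        unfolding Bs_def iS by auto
      have hb: "\<forall>y. y \<notin> Exc n \<longrightarrow> kdiff {0..n} (GS n) n (n + 1) w y = 0"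
        using span_Exc_zero[of b n] b w(2) by blast
      have wc: "\<forall>b. b \<notin> KB n n \<longrightarrow> w b = 0" using w(1) unfolding kchains_iff .
      have "b = (\<lambda>_. 0)" unfolding w(2) by (rule bnd_zero[OF n2 wc hb])
      thus "b \<in> {0}" by (simp add: zero_fun_def)
    qed
    have "kv.dim Zs = kv.dim Bs + card ?D"
      by (rule kv.dim_direct_sum[OF sB BT _ indep_dlt _ Zeq int]) (use finite_KB[of n i] finite_Exc[of n] in auto)
    moreover have "card ?D = n - 1" using card_dlt card_Exc by metis
    ultimately show ?thesis unfolding betti_eq using True n2 by simp
  qed
qed

end
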